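(* Let $a\in\mathbb{R}^n$. The maximal number of pairwise incomparable (with respect to inclusion) half-spaces of $\mathbb{R}_{\max}^n$ with apex $-a$ is $\binom{n}{\lfloor n/2\rfloor}$.
   Context: $\mathbb{R}_{\max}=\mathbb{R}\cup\{-\infty\}$ with $a\oplus b=\max(a,b)$, $ab=a+b$. A half-space with apex $-a$ (where $a\in\mathbb{R}^n$) is a set of the form $\{x\in\mathbb{R}_{\max}^n:\bigoplus_{i\in I}a_ix_i\le\bigoplus_{j\in J}a_jx_j\}$ where $I,J$ are disjoint sets with $I\cup J=\{1,\dots,n\}$. *)

theory Defs
  imports "HOL-Library.Extended_Real"
begin

text \<open>Max-plus semiring R_max = R \<union> {-\<infinity>}, modelled inside ereal (excluding +\<infinity>).
  Vectors of R_max^n are functions nat \<Rightarrow> ereal with coordinates 0..<n,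
  finite-or-minus-infinity values, and value -\<infinity> outside {..<n} (normalisation).\<close>

definition Rmax_vec :: "nat \<Rightarrow> (nat \<Rightarrow> ereal) set" where
  "Rmax_vec n = {x. (\<forall>i. x i \<noteq> \<infinity>) \<and> (\<forall>i\<ge>n. x i = -\<infinity>)}"

text \<open>Max-plus sum over an index set: (+)-max; the empty max is -\<infinity> (the max-plus zero).\<close>
definition halfspace :: "nat \<Rightarrow> (nat \<Rightarrow> real) \<Rightarrow> nat set \<Rightarrow> nat set \<Rightarrow> (nat \<Rightarrow> ereal) set" where
  "halfspace n a I J = {x \<in> Rmax_vec n.
      (SUP i\<in>I. ereal (a i) + x i) \<le> (SUP j\<in>J. ereal (a j) + x j)}"

definition is_halfspace :: "nat \<Rightarrow> (nat \<Rightarrow> real) \<Rightarrow> (nat \<Rightarrow> ereal) set \<Rightarrow> bool" where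
  "is_halfspace n a H \<longleftrightarrow>
     (\<exists>I J. I \<inter> J = {} \<and> I \<union> J = {..<n} \<and> H = halfspace n a I J)"

definition incomparable_family :: "'a set set \<Rightarrow> bool" where
  "incomparable_family F \<longleftrightarrow> (\<forall>H1\<in>F. \<forall>H2\<in>F. H1 \<subseteq> H2 \<longrightarrow> H1 = H2)"

end

theory Submission
  imports Defs
begin

lemma lym:
  "finite S \<Longrightarrow> F \<subseteq> Pow S \<Longrightarrow> (\<forall>A\<in>F. \<forall>B\<in>F. A \<subseteq> B \<longrightarrow> A = B) \<Longrightarrow>
   (\<Sum>A\<in>F. fact (card A) * fact (card S - card A)) \<le> (fact (card S) :: nat)"
proof (induct "card S" arbitrary: S F rule: less_induct)
  case less
  have finF: "finite F" using less.prems by (meson finite_Pow_iff finite_subset)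
  show ?case
  proof (cases "S \<in> F")
    case True
    then have "F = {S}" using less.prems by blast
    then show ?thesis by simp
  next
    case False
    have cardlt: "card A < card S" if "A \<in> F" for A
    proof -
      have "A \<subset> S" using that False less.prems by blast
      then show ?thesis using less.prems(1) psubset_card_mono by blast
    qed
    show ?thesis
    proof (cases "S = {}")
      case True
      then have "F = {}" using False less.prems by auto
      then show ?thesis by simp
    next
      case ne: False
      define m where "m = card S - 1"
      have cS: "card S = Suc m" using ne less.prems(1) m_def
        by (simp add: card_gt_0_iff)
      define g :: "'a set \<Rightarrow> nat" where "g A = fact (card A) * fact (m - card A)" for A
      have IH: "(\<Sum>A\<in>{A\<in>F. x \<notin> A}. g A) \<le> fact m" if "x \<in> S" for x
      proof -
        have c: "card (S - {x}) = m" using that less.prems(1) cS by simp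
        have "(\<Sum>A\<in>{A\<in>F. x \<notin> A}. fact (card A) * fact (card (S - {x}) - card A))
              \<le> (fact (card (S - {x})) :: nat)"
          apply (rule less.hyps)
          using c cS less.prems by auto
        then show ?thesis unfolding g_def c .
      qed
      have "(\<Sum>x\<in>S. \<Sum>A\<in>{A\<in>F. x \<notin> A}. g A) \<le> (\<Sum>x\<in>S. fact m)"
        by (rule sum_mono) (rule IH)
      also have "\<dots> = fact (card S)" using cS by simp
      finally have s1: "(\<Sum>x\<in>S. \<Sum>A\<in>{A\<in>F. x \<notin> A}. g A) \<le> fact (card S)" .
      have "(\<Sum>x\<in>S. \<Sum>A\<in>{A\<in>F. x \<notin> A}. g A) = (\<Sum>x\<in>S. \<Sum>A\<in>F. if x \<notin> A then g A else 0)"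
        using finF by (simp add: sum.inter_filter)
      also have "\<dots> = (\<Sum>A\<in>F. \<Sum>x\<in>S. if x \<notin> A then g A else 0)"
        by (rule sum.swap)
      also have "\<dots> = (\<Sum>A\<in>F. fact (card A) * fact (card S - card A))"
      proof (rule sum.cong[OF refl])
        fix A assume A: "A \<in> F"
        have AS: "A \<subseteq> S" using A less.prems by blast
        have "(\<Sum>x\<in>S. if x \<notin> A then g A else 0) = (\<Sum>x\<in>{x\<in>S. x \<notin> A}. g A)"
          using less.prems(1) by (rule sum.inter_filter[symmetric])
        also have "{x\<in>S. x \<notin> A} = S - A" by blast
        also have "(\<Sum>x\<in>S - A. g A) = (card S - card A) * g A"
          using AS less.prems(1) by (simp add: card_Diff_subset finite_subset)
        also have "\<dots> = fact (card A) * fact (card S - card A)"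
        proof -
          have lt: "card A < card S" using cardlt A .
          then have e: "card S - card A = Suc (m - card A)" using cS by simp
          show ?thesis unfolding e g_def by (simp add: algebra_simps)
        qed
        finally show "(\<Sum>x\<in>S. if x \<notin> A then g A else 0) = fact (card A) * fact (card S - card A)" .
      qed
      finally show ?thesis using s1 by simp
    qed
  qed
qed

lemma sperner:
  assumes "finite S" "F \<subseteq> Pow S" "\<forall>A\<in>F. \<forall>B\<in>F. A \<subseteq> B \<longrightarrow> A = B"
  shows "card F \<le> card S choose (card S div 2)"
proof -
  let ?n = "card S" let ?M = "?n choose (?n div 2)"
  have finF: "finite F" using assms by (meson finite_Pow_iff finite_subset)
  have le: "fact ?n \<le> fact (card A) * fact (?n - card A) * ?M" if "A \<in> F" for A
  proof -
    have "card A \<le> ?n" using that assms by (meson PowD card_mono subsetD)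
    then have "fact ?n = fact (card A) * fact (?n - card A) * (?n choose card A)"
      by (simp add: binomial_fact_lemma)
    also have "\<dots> \<le> fact (card A) * fact (?n - card A) * ?M"
      by (intro mult_left_mono binomial_maximum) simp
    finally show ?thesis .
  qed
  have "card F * fact ?n = (\<Sum>A\<in>F. fact ?n)" by simp
  also have "\<dots> \<le> (\<Sum>A\<in>F. fact (card A) * fact (?n - card A) * ?M)"
    by (rule sum_mono) (rule le)
  also have "\<dots> = (\<Sum>A\<in>F. fact (card A) * fact (?n - card A)) * ?M"
    by (simp add: sum_distrib_right)
  also have "\<dots> \<le> fact ?n * ?M"
    using lym[OF assms] by (rule mult_right_mono) simp
  finally have "card F * fact ?n \<le> ?M * fact ?n" by (simp add: mult.commute)
  then show ?thesis by simp
qed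

definition hs :: "nat \<Rightarrow> (nat \<Rightarrow> real) \<Rightarrow> nat set \<Rightarrow> (nat \<Rightarrow> ereal) set" where
  "hs n a J = halfspace n a ({..<n} - J) J"

lemma hs_mono: "J \<subseteq> J' \<Longrightarrow> hs n a J \<subseteq> hs n a J'"
proof
  fix x assume JJ: "J \<subseteq> J'" and x: "x \<in> hs n a J"
  have "(SUP i\<in>{..<n} - J'. ereal (a i) + x i) \<le> (SUP i\<in>{..<n} - J. ereal (a i) + x i)"
    using JJ by (intro SUP_subset_mono) auto
  also have "\<dots> \<le> (SUP j\<in>J. ereal (a j) + x j)" using x by (simp add: hs_def halfspace_def)
  also have "\<dots> \<le> (SUP j\<in>J'. ereal (a j) + x j)" using JJ by (intro SUP_subset_mono) auto
  finally show "x \<in> hs n a J'" using x by (simp add: hs_def halfspace_def)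
qed

lemma hs_anti: assumes "J \<subseteq> {..<n}" "hs n a J \<subseteq> hs n a J'" shows "J \<subseteq> J'"
proof
  fix j assume j: "j \<in> J"
  show "j \<in> J'"
  proof (rule ccontr)
    assume nj: "j \<notin> J'"
    define x :: "nat \<Rightarrow> ereal" where "x = (\<lambda>i. if i = j then 0 else -\<infinity>)"
    have jn: "j < n" using j assms by auto
    have xR: "x \<in> Rmax_vec n" using jn by (auto simp: Rmax_vec_def x_def)
    have s1: "(SUP i\<in>{..<n} - J. ereal (a i) + x i) = -\<infinity>"
      using j by (auto simp: x_def intro!: SUP_eqI)
    have "x \<in> hs n a J" using xR s1 by (simp add: hs_def halfspace_def)
    then have "x \<in> hs n a J'" using assms by blast
    then have le: "(SUP i\<in>{..<n} - J'. ereal (a i) + x i) \<le> (SUP i\<in>J'. ereal (a i) + x i)"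
      by (simp add: hs_def halfspace_def)
    have s2: "(SUP i\<in>J'. ereal (a i) + x i) = -\<infinity>"
      using nj by (auto simp: x_def intro!: SUP_eqI)
    have "ereal (a j) + x j \<le> (SUP i\<in>{..<n} - J'. ereal (a i) + x i)"
      using jn nj by (intro SUP_upper) auto
    then have "ereal (a j) \<le> -\<infinity>" using le s2 by (simp add: x_def)
    then show False by simp
  qed
qed

lemma is_hs_iff: "is_halfspace n a H \<longleftrightarrow> (\<exists>J. J \<subseteq> {..<n} \<and> H = hs n a J)"
proof
  assume "is_halfspace n a H"
  then obtain I J where "I \<inter> J = {}" "I \<union> J = {..<n}" "H = halfspace n a I J"
    unfolding is_halfspace_def by blast
  moreover then have "I = {..<n} - J" by blast
  ultimately show "\<exists>J. J \<subseteq> {..<n} \<and> H = hs n a J" unfolding hs_def by blast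
next
  assume "\<exists>J. J \<subseteq> {..<n} \<and> H = hs n a J"
  then obtain J where "J \<subseteq> {..<n}" "H = hs n a J" by blast
  then show "is_halfspace n a H" unfolding is_halfspace_def hs_def
    by (intro exI[of _ "{..<n} - J"] exI[of _ J]) auto
qed

theorem lemma4p7:
  fixes n :: nat and a :: "nat \<Rightarrow> real"
  shows "(\<exists>F. F \<subseteq> {H. is_halfspace n a H} \<and> incomparable_family F
              \<and> card F = n choose (n div 2))
       \<and> (\<forall>F. F \<subseteq> {H. is_halfspace n a H} \<and> incomparable_family F
              \<longrightarrow> finite F \<and> card F \<le> n choose (n div 2))"
proof
  define K where "K = {J. J \<subseteq> {..<n} \<and> card J = n div 2}"
  have inj: "inj_on (hs n a) (Pow {..<n})"
  proof (rule inj_onI)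
    fix x y assume "x \<in> Pow {..<n}" "y \<in> Pow {..<n}" "hs n a x = hs n a y"
    then show "x = y" using hs_anti[of x n a y] hs_anti[of y n a x] by auto
  qed
  have KP: "K \<subseteq> Pow {..<n}" unfolding K_def by auto
  show "\<exists>F. F \<subseteq> {H. is_halfspace n a H} \<and> incomparable_family F \<and> card F = n choose (n div 2)"
  proof (intro exI conjI)
    show "hs n a ` K \<subseteq> {H. is_halfspace n a H}" using is_hs_iff K_def by auto
    show "incomparable_family (hs n a ` K)"
      unfolding incomparable_family_def
    proof (intro ballI impI)
      fix H1 H2 assume "H1 \<in> hs n a ` K" "H2 \<in> hs n a ` K" "H1 \<subseteq> H2"
      then obtain J1 J2 where J: "J1 \<in> K" "J2 \<in> K" "H1 = hs n a J1" "H2 = hs n a J2" "H1 \<subseteq> H2"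
        by blast
      then have "J1 \<subseteq> J2" using hs_anti[of J1 n a J2] K_def by simp
      moreover have "finite J2" "card J1 = card J2" using J K_def finite_subset by auto
      ultimately have "J1 = J2" using card_subset_eq by blast
      then show "H1 = H2" using J by simp
    qed
    have "card (hs n a ` K) = card K" using inj KP by (meson card_image inj_on_subset)
    also have "\<dots> = n choose (n div 2)" unfolding K_def using n_subsets[of "{..<n}"] by simp
    finally show "card (hs n a ` K) = n choose (n div 2)" .
  qed
  show "\<forall>F. F \<subseteq> {H. is_halfspace n a H} \<and> incomparable_family F
              \<longrightarrow> finite F \<and> card F \<le> n choose (n div 2)"
  proof (intro allI impI, elim conjE)
    fix F assume FH: "F \<subseteq> {H. is_halfspace n a H}" and inc: "incomparable_family F"
    have Fsub: "F \<subseteq> hs n a ` Pow {..<n}" using FH is_hs_iff by blast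
    define G where "G = {J \<in> Pow {..<n}. hs n a J \<in> F}"
    have FG: "F = hs n a ` G" using Fsub G_def by auto
    show "finite F \<and> card F \<le> n choose (n div 2)"
    proof
      show "finite F" using Fsub finite_subset by blast
      have "G \<subseteq> Pow {..<n}" using G_def by auto
      then have "inj_on (hs n a) G" using inj inj_on_subset by blast
      then have "card F = card G" unfolding FG by (rule card_image)
      also have "\<dots> \<le> card {..<n} choose (card {..<n} div 2)"
      proof (rule sperner)
        show "G \<subseteq> Pow {..<n}" using G_def by auto
        show "\<forall>A\<in>G. \<forall>B\<in>G. A \<subseteq> B \<longrightarrow> A = B"
        proof (intro ballI impI)
          fix A B assume AB: "A \<in> G" "B \<in> G" "A \<subseteq> B"
          have "hs n a A \<in> F" "hs n a B \<in> F" using AB G_def by auto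
          moreover have "hs n a A \<subseteq> hs n a B" using hs_mono AB(3) .
          ultimately have "hs n a A = hs n a B" using inc
            unfolding incomparable_family_def by blast
          moreover have "A \<in> Pow {..<n}" "B \<in> Pow {..<n}" using AB G_def by auto
          ultimately show "A = B" using inj inj_onD by metis
        qed
      qed simp
      finally show "card F \<le> n choose (n div 2)" by simp
    qed
  qed
qed

end
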